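(* Let $R$ be a reflexive relation on $U$ such that $\mathrm{DM(RS)}$ is completely distributive. Let $x,y\in U\setminus\mathcal S$ be such that $\{x\}^{\blacktriangle}$ and $\{y\}^{\blacktriangle}$ are completely join-irreducible in $\wp(U)^{\blacktriangle}$. The following are equivalent: (i) there exists $u\in U$ with $\{x\}^{\blacktriangle},\{y\}^{\blacktriangle}\subseteq\{u\}^{\blacktriangle}$; (ii) each of $(\emptyset,\{x\}^{\blacktriangle})$ and $(\emptyset,\{y\}^{\blacktriangle})$ is below both $g(\emptyset,\{x\}^{\blacktriangle})$ and $g(\emptyset,\{y\}^{\blacktriangle})$ in $\mathrm{DM(RS)}$.
   Context: Let $U$ be a set and $R\subseteq U\times U$ a binary relation. For $x\in U$, $R(x)=\{y\in U\mid (x,y)\in R\}$ and $\breve R(x)=\{y\in U\mid (y,x)\in R\}$. For $X\subseteq U$: $X^{\blacktriangledown}=\{x\in U\mid R(x)\subseteq X\}$, $X^{\blacktriangle}=\{x\in U\mid R(x)\cap X\neq\emptyset\}$, $X^{\triangledown}=\{x\in U\mid \breve R(x)\subseteq X\}$, $X^{\vartriangle}=\{x\in U\mid \breve R(x)\cap X\neq\emptyset\}$; composites like $X^{\vartriangle\blacktriangledown}$ mean $(X^{\vartriangle})^{\blacktriangledown}$. $\wp(U)^{\blacktriangledown}=\{X^{\blacktriangledown}\mid X\subseteq U\}$, $\wp(U)^{\blacktriangle}=\{X^{\blacktriangle}\mid X\subseteq U\}$, complete lattices under $\subseteq$. $\mathcal S=\{x\in U\mid |R(x)|=1\}$. $\mathrm{RS}=\{(X^{\blacktriangledown},X^{\blacktriangle})\mid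 X\subseteq U\}$ ordered coordinatewise; $\mathrm{DM(RS)}$ is its Dedekind–MacNeille completion, identified with $\{(A,B)\in\wp(U)^{\blacktriangledown}\times\wp(U)^{\blacktriangle}\mid A^{\vartriangle\blacktriangle}\subseteq B,\ A\cap\mathcal S=B\cap\mathcal S\}$ ordered coordinatewise, with meets $\bigwedge_i(X_i,Y_i)=(\bigcap_iX_i,(\bigcap_iY_i)^{\triangledown\blacktriangle})$ and joins $\bigvee_i(X_i,Y_i)=((\bigcup_iX_i)^{\vartriangle\blacktriangledown},\bigcup_iY_i)$. An element $j$ of a complete lattice is completely join-irreducible if $j=\bigvee S$ implies $j\in S$. When $\mathrm{DM(RS)}$ is distributive ($R$ reflexive) it is a Kleene algebra with $\sim(A,B)=(B^c,A^c)$; for a completely join-irreducible $j$ of $\mathrm{DM(RS)}$, $g(j)=\bigwedge\{a\in\mathrm{DM(RS)}\mid a\not\le\sim j\}$. (Under the hypotheses, $(\emptyset,\{x\}^{\blacktriangle})$ and $(\emptyset,\{y\}^{\blacktriangle})$ are completely join-irreducible elements of $\mathrm{DM(RS)}$.) *)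

theory Defs
  imports Main
begin

text \<open>The universe U is the whole type 'a; R is a binary relation on it.\<close>

definition Rimg :: "('a \<times> 'a) set \<Rightarrow> 'a \<Rightarrow> 'a set" where
  "Rimg R x = {y. (x, y) \<in> R}"

definition Rinv :: "('a \<times> 'a) set \<Rightarrow> 'a \<Rightarrow> 'a set" where
  "Rinv R x = {y. (y, x) \<in> R}"

definition lowD :: "('a \<times> 'a) set \<Rightarrow> 'a set \<Rightarrow> 'a set" where
  "lowD R X = {x. Rimg R x \<subseteq> X}"

definition upD :: "('a \<times> 'a) set \<Rightarrow> 'a set \<Rightarrow> 'a set" where
  "upD R X = {x. Rimg R x \<inter> X \<noteq> {}}"

definition lowI :: "('a \<times> 'a) set \<Rightarrow> 'a set \<Rightarrow> 'a set" where
  "lowI R X = {x. Rinv R x \<subseteq> X}"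

definition upI :: "('a \<times> 'a) set \<Rightarrow> 'a set \<Rightarrow> 'a set" where
  "upI R X = {x. Rinv R x \<inter> X \<noteq> {}}"

definition Sset :: "('a \<times> 'a) set \<Rightarrow> 'a set" where
  "Sset R = {x. card (Rimg R x) = 1}"

definition DM :: "('a \<times> 'a) set \<Rightarrow> ('a set \<times> 'a set) set" where
  "DM R = {(A, B). A \<in> range (lowD R) \<and> B \<in> range (upD R)
                 \<and> upD R (upI R A) \<subseteq> B \<and> A \<inter> Sset R = B \<inter> Sset R}"

definition DM_le :: "('a set \<times> 'a set) \<Rightarrow> ('a set \<times> 'a set) \<Rightarrow> bool" where
  "DM_le p q \<longleftrightarrow> fst p \<subseteq> fst q \<and> snd p \<subseteq> snd q"

definition DM_Inf :: "('a \<times> 'a) set \<Rightarrow> ('a set \<times> 'a set) set \<Rightarrow> 'a set \<times> 'a set" where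
  "DM_Inf R P = (\<Inter> (fst ` P), upD R (lowI R (\<Inter> (snd ` P))))"

definition DM_Sup :: "('a \<times> 'a) set \<Rightarrow> ('a set \<times> 'a set) set \<Rightarrow> 'a set \<times> 'a set" where
  "DM_Sup R P = (lowD R (upI R (\<Union> (fst ` P))), \<Union> (snd ` P))"

definition DM_completely_distributive :: "('a \<times> 'a) set \<Rightarrow> bool" where
  "DM_completely_distributive R \<longleftrightarrow>
     (\<forall>\<A>. \<A> \<subseteq> Pow (DM R) \<longrightarrow>
        DM_Inf R (DM_Sup R ` \<A>) =
        DM_Sup R (DM_Inf R ` {f ` \<A> | f. \<forall>Y\<in>\<A>. f Y \<in> Y}))"

definition is_lub_in :: "('b \<Rightarrow> 'b \<Rightarrow> bool) \<Rightarrow> 'b set \<Rightarrow> 'b set \<Rightarrow> 'b \<Rightarrow> bool" where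
  "is_lub_in le L S j \<longleftrightarrow> j \<in> L \<and> (\<forall>s\<in>S. le s j) \<and> (\<forall>u\<in>L. (\<forall>s\<in>S. le s u) \<longrightarrow> le j u)"

definition cji_in :: "('b \<Rightarrow> 'b \<Rightarrow> bool) \<Rightarrow> 'b set \<Rightarrow> 'b \<Rightarrow> bool" where
  "cji_in le L j \<longleftrightarrow> j \<in> L \<and> (\<forall>S. S \<subseteq> L \<longrightarrow> is_lub_in le L S j \<longrightarrow> j \<in> S)"

definition DM_neg :: "'a set \<times> 'a set \<Rightarrow> 'a set \<times> 'a set" where
  "DM_neg p = (- snd p, - fst p)"

definition gmap :: "('a \<times> 'a) set \<Rightarrow> 'a set \<times> 'a set \<Rightarrow> 'a set \<times> 'a set" where
  "gmap R j = DM_Inf R {a \<in> DM R. \<not> DM_le a (DM_neg j)}"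

end

theory Submission
  imports Defs
begin

lemma upD_single: "upD R {x} = {z. (z,x) \<in> R}"
  by (auto simp: upD_def Rimg_def)

lemma upD_mono: "X \<subseteq> Y \<Longrightarrow> upD R X \<subseteq> upD R Y"
  by (auto simp: upD_def)

lemma lowI_mono: "X \<subseteq> Y \<Longrightarrow> lowI R X \<subseteq> lowI R Y"
  by (auto simp: lowI_def)

lemma upD_lowI_sub: "refl R \<Longrightarrow> upD R (lowI R Y) \<subseteq> Y"
  by (auto simp: upD_def lowI_def Rimg_def Rinv_def refl_on_def)

lemma up_single_sub: "upD R {x} \<subseteq> upD R (lowI R (upD R {x}))"
  by (auto simp: upD_def lowI_def Rimg_def Rinv_def)

lemma upD_Union: "upD R W = (\<Union>w\<in>W. upD R {w})"
  by (auto simp: upD_def)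

lemma DM_mem: "(lowD R X, upD R X) \<in> DM R"
proof -
  have "upD R (upI R (lowD R X)) \<subseteq> upD R X"
    by (rule upD_mono) (auto simp: upI_def lowD_def Rinv_def Rimg_def)
  moreover have "lowD R X \<inter> Sset R = upD R X \<inter> Sset R"
  proof -
    have "z \<in> lowD R X \<longleftrightarrow> z \<in> upD R X" if "z \<in> Sset R" for z
    proof -
      from that have "card (Rimg R z) = 1" by (simp add: Sset_def)
      then obtain w where "Rimg R z = {w}" by (rule card_1_singletonE)
      then show ?thesis by (auto simp: lowD_def upD_def)
    qed
    then show ?thesis by blast
  qed
  ultimately show ?thesis unfolding DM_def by auto
qed

lemma keyL:
  assumes refl: "refl R" and cd: "DM_completely_distributive R"
    and cji: "cji_in (\<subseteq>) (range (upD R)) (upD R {x})"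
    and sub: "upD R {x} \<subseteq> upD R W"
  shows "\<exists>w\<in>W. upD R {x} \<subseteq> upD R {w}"
proof -
  define q where "q = (\<lambda>z. (lowD R {z}, upD R {z}))"
  define AA where "AA = {{q x}, q ` W}"
  have A: "AA \<subseteq> Pow (DM R)" using DM_mem unfolding AA_def q_def by auto
  have eq: "DM_Inf R (DM_Sup R ` AA) = DM_Sup R (DM_Inf R ` {f ` AA |f. \<forall>Y\<in>AA. f Y \<in> Y})"
    using cd A unfolding DM_completely_distributive_def by blast
  have sW: "\<Union> (snd ` q ` W) = upD R W"
    using upD_Union[of R W] by (auto simp: q_def)
  have "snd (DM_Inf R (DM_Sup R ` AA)) = upD R (lowI R (upD R {x} \<inter> upD R W))"
    unfolding AA_def DM_Inf_def DM_Sup_def using sW by (simp add: q_def)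
  also have "upD R {x} \<inter> upD R W = upD R {x}" using sub by blast
  finally have L: "snd (DM_Inf R (DM_Sup R ` AA)) = upD R (lowI R (upD R {x}))" .
  define Sf where "Sf = {upD R (lowI R (\<Inter> (snd ` f ` AA))) | f. \<forall>Y\<in>AA. f Y \<in> Y}"
  have Rs: "snd (DM_Sup R (DM_Inf R ` {f ` AA |f. \<forall>Y\<in>AA. f Y \<in> Y})) = \<Union> Sf"
  proof -
    have "snd (DM_Sup R (DM_Inf R ` {f ` AA |f. \<forall>Y\<in>AA. f Y \<in> Y}))
       = \<Union> ((\<lambda>P. upD R (lowI R (\<Inter> (snd ` P)))) ` {f ` AA |f. \<forall>Y\<in>AA. f Y \<in> Y})"
      unfolding DM_Sup_def DM_Inf_def by (simp add: image_image)
    also have "(\<lambda>P. upD R (lowI R (\<Inter> (snd ` P)))) ` {f ` AA |f. \<forall>Y\<in>AA. f Y \<in> Y} = Sf"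
      unfolding Sf_def by blast
    finally show ?thesis .
  qed
  have Sf_sub: "s \<subseteq> upD R {x}" if "s \<in> Sf" for s
  proof -
    from that obtain f where s: "s = upD R (lowI R (\<Inter> (snd ` f ` AA)))"
      and f: "\<forall>Y\<in>AA. f Y \<in> Y" unfolding Sf_def by blast
    have "f {q x} = q x" using f unfolding AA_def by auto
    hence "q x \<in> f ` AA" unfolding AA_def by force
    hence "snd (q x) \<in> snd ` f ` AA" by (rule imageI)
    hence "\<Inter> (snd ` f ` AA) \<subseteq> snd (q x)" by (rule Inter_lower)
    hence "\<Inter> (snd ` f ` AA) \<subseteq> upD R {x}" by (simp add: q_def)
    hence "s \<subseteq> upD R (lowI R (upD R {x}))" unfolding s by (intro upD_mono lowI_mono)
    thus ?thesis using upD_lowI_sub[OF refl] by blast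
  qed
  have U: "\<Union> Sf = upD R {x}"
  proof
    show "\<Union> Sf \<subseteq> upD R {x}" using Sf_sub by blast
    show "upD R {x} \<subseteq> \<Union> Sf" using up_single_sub[of R x] L Rs eq by simp
  qed
  have SfL: "Sf \<subseteq> range (upD R)" unfolding Sf_def by auto
  have "is_lub_in (\<subseteq>) (range (upD R)) Sf (upD R {x})"
  proof -
    have "\<forall>u\<in>range (upD R). (\<forall>s\<in>Sf. s \<subseteq> u) \<longrightarrow> upD R {x} \<subseteq> u"
      using U by blast
    thus ?thesis unfolding is_lub_in_def using Sf_sub by blast
  qed
  hence "upD R {x} \<in> Sf" using cji SfL unfolding cji_in_def by blast
  then obtain f where s: "upD R {x} = upD R (lowI R (\<Inter> (snd ` f ` AA)))"
    and f: "\<forall>Y\<in>AA. f Y \<in> Y" unfolding Sf_def by blast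
  have "f (q ` W) \<in> q ` W" using f unfolding AA_def by auto
  then obtain w where w: "w \<in> W" "f (q ` W) = q w" by auto
  hence "q w \<in> f ` AA" unfolding AA_def by force
  hence "snd (q w) \<in> snd ` f ` AA" by (rule imageI)
  hence "\<Inter> (snd ` f ` AA) \<subseteq> snd (q w)" by (rule Inter_lower)
  hence "\<Inter> (snd ` f ` AA) \<subseteq> upD R {w}" by (simp add: q_def)
  hence "upD R {x} \<subseteq> upD R (lowI R (upD R {w}))" unfolding s by (intro upD_mono lowI_mono)
  thus ?thesis using upD_lowI_sub[OF refl] w by blast
qed

lemma gsnd: "snd (gmap R ({}, upD R {y})) =
  upD R (lowI R (\<Inter> (snd ` {a\<in>DM R. fst a \<inter> upD R {y} \<noteq> {}})))"
proof -
  have "{a\<in>DM R. \<not> DM_le a (DM_neg ({}, upD R {y}))} = {a\<in>DM R. fst a \<inter> upD R {y} \<noteq> {}}"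
    by (auto simp: DM_le_def DM_neg_def)
  thus ?thesis by (simp add: gmap_def DM_Inf_def)
qed

lemma dir1:
  assumes "upD R {p} \<subseteq> upD R {u}" "upD R {q} \<subseteq> upD R {u}"
  shows "DM_le ({}, upD R {p}) (gmap R ({}, upD R {q}))"
proof -
  let ?C = "\<Inter> (snd ` {a\<in>DM R. fst a \<inter> upD R {q} \<noteq> {}})"
  have uC: "u \<in> lowI R ?C"
  proof -
    have "v \<in> snd a" if "(v,u) \<in> R" "a \<in> DM R" "fst a \<inter> upD R {q} \<noteq> {}" for v a
    proof -
      obtain A B where ab: "a = (A,B)" by force
      from that(3) ab obtain a0 where "a0 \<in> A" "(a0,q) \<in> R" by (auto simp: upD_single)
      hence "(a0,u) \<in> R" using assms(2) by (auto simp: upD_single)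
      hence "u \<in> upI R A" using \<open>a0 \<in> A\<close> by (auto simp: upI_def Rinv_def)
      hence "v \<in> upD R (upI R A)" using that(1) by (auto simp: upD_def Rimg_def)
      moreover have "upD R (upI R A) \<subseteq> B" using that(2) ab by (simp add: DM_def)
      ultimately show ?thesis using ab by auto
    qed
    thus ?thesis by (auto simp: lowI_def Rinv_def)
  qed
  have "upD R {p} \<subseteq> upD R (lowI R ?C)"
  proof
    fix z assume "z \<in> upD R {p}"
    hence "(z,u) \<in> R" using assms(1) by (auto simp: upD_single)
    thus "z \<in> upD R (lowI R ?C)" using uC by (auto simp: upD_def Rimg_def)
  qed
  thus ?thesis by (simp add: DM_le_def gsnd)
qed

theorem mainTheorem12:
  fixes R :: "('a \<times> 'a) set" and x y :: 'a
  assumes "refl R"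
    and "DM_completely_distributive R"
    and "x \<notin> Sset R" and "y \<notin> Sset R"
    and "cji_in (\<subseteq>) (range (upD R)) (upD R {x})"
    and "cji_in (\<subseteq>) (range (upD R)) (upD R {y})"
  shows "(\<exists>u. upD R {x} \<subseteq> upD R {u} \<and> upD R {y} \<subseteq> upD R {u}) \<longleftrightarrow>
         (DM_le ({}, upD R {x}) (gmap R ({}, upD R {x})) \<and>
          DM_le ({}, upD R {x}) (gmap R ({}, upD R {y})) \<and>
          DM_le ({}, upD R {y}) (gmap R ({}, upD R {x})) \<and>
          DM_le ({}, upD R {y}) (gmap R ({}, upD R {y})))"
proof
  assume "\<exists>u. upD R {x} \<subseteq> upD R {u} \<and> upD R {y} \<subseteq> upD R {u}"
  then obtain u where ux: "upD R {x} \<subseteq> upD R {u}" and uy: "upD R {y} \<subseteq> upD R {u}" by blast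
  thus "DM_le ({}, upD R {x}) (gmap R ({}, upD R {x})) \<and>
          DM_le ({}, upD R {x}) (gmap R ({}, upD R {y})) \<and>
          DM_le ({}, upD R {y}) (gmap R ({}, upD R {x})) \<and>
          DM_le ({}, upD R {y}) (gmap R ({}, upD R {y}))"
    using dir1[OF ux ux] dir1[OF ux uy] dir1[OF uy ux] dir1[OF uy uy] by blast
next
  assume "DM_le ({}, upD R {x}) (gmap R ({}, upD R {x})) \<and>
          DM_le ({}, upD R {x}) (gmap R ({}, upD R {y})) \<and>
          DM_le ({}, upD R {y}) (gmap R ({}, upD R {x})) \<and>
          DM_le ({}, upD R {y}) (gmap R ({}, upD R {y}))"
  hence h: "DM_le ({}, upD R {x}) (gmap R ({}, upD R {y}))" by blast
  let ?F = "{a\<in>DM R. fst a \<inter> upD R {y} \<noteq> {}}"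
  have "upD R {x} \<subseteq> upD R (lowI R (\<Inter> (snd ` ?F)))"
    using h by (simp add: DM_le_def gsnd)
  hence xC: "upD R {x} \<subseteq> \<Inter> (snd ` ?F)" using upD_lowI_sub[OF assms(1)] by blast
  define V where "V = {t. upD R {x} \<subseteq> upD R {t}}"
  have "upD R {y} \<subseteq> upD R V"
  proof
    fix a assume a: "a \<in> upD R {y}"
    have "a \<in> lowD R (Rimg R a)" by (simp add: lowD_def)
    hence "(lowD R (Rimg R a), upD R (Rimg R a)) \<in> ?F" using DM_mem a by auto
    hence "upD R (Rimg R a) \<in> snd ` ?F" by (rule rev_image_eqI) simp
    hence "\<Inter> (snd ` ?F) \<subseteq> upD R (Rimg R a)" by (rule Inter_lower)
    hence "upD R {x} \<subseteq> upD R (Rimg R a)" using xC by blast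
    then obtain t where t: "t \<in> Rimg R a" "upD R {x} \<subseteq> upD R {t}"
      using keyL[OF assms(1,2,5)] by blast
    thus "a \<in> upD R V" unfolding V_def by (auto simp: upD_def)
  qed
  then obtain t where "t \<in> V" "upD R {y} \<subseteq> upD R {t}"
    using keyL[OF assms(1,2,6)] by blast
  thus "\<exists>u. upD R {x} \<subseteq> upD R {u} \<and> upD R {y} \<subseteq> upD R {u}"
    unfolding V_def by blast
qed

end
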